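(* Let $(V,\vec v)$ be a valid epistemic state on $\Omega$, let $V_A$ be a measurement on subsystem $A$ with outcome $\vec v_{A=1}$ and $V_B$ a measurement on subsystem $B$ with outcome $\vec v_{B=1}$, and let $V_{\text{commute},A}=\{\vec f\in V:[\vec f,\vec g]=0\ \forall\vec g\in V_A\}$. The inference "$A=1\implies B=1$" can be made if and only if (1) $V_B\subset V_{\text{commute},A}\oplus V_A$, and (2) $(V_{\text{commute},A}^\perp+\vec v)\cap(V_A^\perp+\vec v_{A=1})\cap(V_B^\perp+\vec v_{B=1})\neq\emptyset$.
   Context: Toy theory (quadrature formalism): $\Omega=\mathbb{Z}_d^{2n}$ or $\mathbb{R}^{2n}$, coordinates $(q_1,p_1,\dots)$; observables $\vec f\in\Omega$ with value $\vec f^T\vec m$; Poisson bracket $[\vec f,\vec g]=\sum_i(f_{2i-1}g_{2i}-f_{2i}g_{2i-1})$; $V^\perp=\{\vec m:\vec f^T\vec m=0\ \forall\vec f\in V\}$. Valid epistemic state $(V,\vec v)$: $V$ isotropic, compatible ontic states $V^\perp+\vec v$ uniformly distributed. A measurement is an isotropic $V_\pi$, outcome $\vec v_\pi$ occurs iff the ontic state lies in $V_\pi^\perp+\vec v_\pi$; an outcome occurs with certainty if it has probability 1. Measurements "on subsystem $A$/$B$" have all vectors supported on the coordinates of that subsystem. Update rule: after obtaining $\vec v_{A=1}$ in $V_A$, the state becomes $(V_{\text{commute},A}\oplus V_A,\vec v')$ with $\vec v'\in(V_A^\perp+\vec v_{A=1})\cap(V_{\text{commute},A}^\perp+\vec v)$.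 The inference "$A=1\implies B=1$" can be made if this updated state is defined (the intersection is nonempty) and in it the outcome $\vec v_{B=1}$ of $V_B$ occurs with certainty. *)

theory Defs
  imports Main
begin

text \<open>Phase space of the toy theory: modes indexed by a finite type 'm, each with
a position-like (Q) and momentum-like (P) quadrature; coordinates in a field 'a
(Z_d with d prime, or the reals).\<close>

datatype quad = Q | P

type_synonym ('a, 'm) phase = "'m \<times> quad \<Rightarrow> 'a"

definition pzero :: "('a::field, 'm) phase" where
  "pzero = (\<lambda>x. 0)"

definition padd :: "('a::field, 'm) phase \<Rightarrow> ('a, 'm) phase \<Rightarrow> ('a, 'm) phase" where
  "padd f g = (\<lambda>x. f x + g x)"

definition psmult :: "'a::field \<Rightarrow> ('a, 'm) phase \<Rightarrow> ('a, 'm) phase" where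
  "psmult c f = (\<lambda>x. c * f x)"

text \<open>Value of observable f at ontic state m: f^T m.\<close>
definition val :: "('a::field, 'm::finite) phase \<Rightarrow> ('a, 'm) phase \<Rightarrow> 'a" where
  "val f m = (\<Sum>i\<in>UNIV. f (i, Q) * m (i, Q) + f (i, P) * m (i, P))"

definition pbracket :: "('a::field, 'm::finite) phase \<Rightarrow> ('a, 'm) phase \<Rightarrow> 'a" where
  "pbracket f g = (\<Sum>i\<in>UNIV. f (i, Q) * g (i, P) - f (i, P) * g (i, Q))"

definition is_subspace :: "('a::field, 'm) phase set \<Rightarrow> bool" where
  "is_subspace V \<longleftrightarrow> pzero \<in> V \<and> (\<forall>f\<in>V. \<forall>g\<in>V. padd f g \<in> V)
     \<and> (\<forall>c f. f \<in> V \<longrightarrow> psmult c f \<in> V)"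

definition isotropic :: "('a::field, 'm::finite) phase set \<Rightarrow> bool" where
  "isotropic V \<longleftrightarrow> is_subspace V \<and> (\<forall>f\<in>V. \<forall>g\<in>V. pbracket f g = 0)"

definition perp :: "('a::field, 'm::finite) phase set \<Rightarrow> ('a, 'm) phase set" where
  "perp V = {m. \<forall>f\<in>V. val f m = 0}"

definition coset :: "('a::field, 'm) phase set \<Rightarrow> ('a, 'm) phase \<Rightarrow> ('a, 'm) phase set" where
  "coset W v = (\<lambda>w. padd w v) ` W"

definition sumsp :: "('a::field, 'm) phase set \<Rightarrow> ('a, 'm) phase set \<Rightarrow> ('a, 'm) phase set" where
  "sumsp U W = {padd f g | f g. f \<in> U \<and> g \<in> W}"

definition valid_state :: "('a::field, 'm::finite) phase set \<Rightarrow> ('a, 'm) phase \<Rightarrow> bool" where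
  "valid_state V v \<longleftrightarrow> isotropic V"

definition supported_on :: "'m set \<Rightarrow> ('a::field, 'm) phase \<Rightarrow> bool" where
  "supported_on S f \<longleftrightarrow> (\<forall>i. i \<notin> S \<longrightarrow> f (i, Q) = 0 \<and> f (i, P) = 0)"

definition measurement_on :: "'m set \<Rightarrow> ('a::field, 'm::finite) phase set \<Rightarrow> bool" where
  "measurement_on S V\<^sub>\<pi> \<longleftrightarrow> isotropic V\<^sub>\<pi> \<and> (\<forall>f\<in>V\<^sub>\<pi>. supported_on S f)"

text \<open>Outcome v_pi of measurement V_pi occurs with probability 1 in state (V,v):
the uniform distribution on V^perp + v is concentrated on V_pi^perp + v_pi, i.e.
the former is contained in the latter.\<close>
definition occurs_certainly ::
  "('a::field, 'm::finite) phase set \<Rightarrow> ('a, 'm) phase \<Rightarrow> ('a, 'm) phase set \<Rightarrow> ('a, 'm) phase \<Rightarrow> bool" where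
  "occurs_certainly V v V\<^sub>\<pi> v\<^sub>\<pi> \<longleftrightarrow> coset (perp V) v \<subseteq> coset (perp V\<^sub>\<pi>) v\<^sub>\<pi>"

definition commute_part :: "('a::field, 'm::finite) phase set \<Rightarrow> ('a, 'm) phase set \<Rightarrow> ('a, 'm) phase set" where
  "commute_part V VA = {f \<in> V. \<forall>g\<in>VA. pbracket f g = 0}"

text \<open>The inference A=1 ==> B=1: the updated state (V_commute,A \<oplus> V_A, v') is defined
(the admissible set for v' is nonempty) and, for it, outcome vB of VB occurs with
certainty (for any admissible choice of v').\<close>
definition can_infer ::
  "('a::field, 'm::finite) phase set \<Rightarrow> ('a, 'm) phase \<Rightarrow> ('a, 'm) phase set \<Rightarrow> ('a, 'm) phase
   \<Rightarrow> ('a, 'm) phase set \<Rightarrow> ('a, 'm) phase \<Rightarrow> bool" where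
  "can_infer V v VA vA VB vB \<longleftrightarrow>
     (let W = commute_part V VA;
          S = coset (perp VA) vA \<inter> coset (perp W) v
      in S \<noteq> {} \<and> (\<forall>v'\<in>S. occurs_certainly (sumsp W VA) v' VB vB))"

end

theory Submission imports Defs "HOL-Library.Function_Algebras" HOL.Vector_Spaces begin

lemma sum_fun_apply': "finite K \<Longrightarrow> (sum F K) j = (\<Sum>k\<in>K. F k j)"
  by (induction K rule: finite_induct) auto

lemma vs_phase: "vector_space (\<lambda>(c::'a::field) (f::('a,'m) phase). \<lambda>x. c * f x)"
  by unfold_locales (auto simp: algebra_simps)

lemma vs_field: "vector_space ((*) :: 'a::field \<Rightarrow> 'a \<Rightarrow> 'a)"
  by unfold_locales (auto simp: algebra_simps)

lemma val_alt: "val f m = (\<Sum>k\<in>(UNIV::'m set) \<times> {Q,P}. f k * m k)"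
  for f m :: "('a::field,'m::finite) phase"
proof -
  have "val f m = (\<Sum>i\<in>(UNIV::'m set). \<Sum>q\<in>{Q,P}. f (i,q) * m (i,q))"
    unfolding val_def by simp
  also have "\<dots> = (\<Sum>k\<in>(UNIV::'m set) \<times> {Q,P}. f k * m k)"
    by (subst sum.cartesian_product) (simp add: case_prod_beta')
  finally show ?thesis .
qed

lemma val_sym: "val f m = val m f"
  by (simp add: val_def mult.commute)

lemma quad_UNIV: "(UNIV :: quad set) = {Q,P}"
  using quad.exhaust by auto

lemma perp_perp:
  fixes U :: "('a::field,'m::finite) phase set"
  assumes U: "is_subspace U"
  shows "perp (perp U) \<subseteq> U"
proof
  fix x assume x: "x \<in> perp (perp U)"
  define sc where "sc = (\<lambda>(c::'a) (f::('a,'m) phase). \<lambda>x. c * f x)"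
  interpret vs1: vector_space sc unfolding sc_def by (rule vs_phase)
  interpret vs2: vector_space "(*) :: 'a \<Rightarrow> 'a \<Rightarrow> 'a" by (rule vs_field)
  interpret vsp: vector_space_pair sc "(*) :: 'a \<Rightarrow> 'a \<Rightarrow> 'a" by unfold_locales
  have sub: "vs1.subspace U"
  proof (rule vs1.subspaceI)
    show "0 \<in> U" using U unfolding is_subspace_def pzero_def zero_fun_def by simp
    show "x + y \<in> U" if "x \<in> U" "y \<in> U" for x y
      using U that unfolding is_subspace_def padd_def plus_fun_def by simp
    show "sc c x \<in> U" if "x \<in> U" for c x
      using U that unfolding is_subspace_def psmult_def sc_def by simp
  qed
  show "x \<in> U"
  proof (rule ccontr)
    assume xU: "x \<notin> U"
    obtain B where B: "B \<subseteq> U" "vs1.independent B" "U \<subseteq> vs1.span B"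
      using vs1.maximal_independent_subset by blast
    have spanB: "vs1.span B = U"
      using B sub vs1.span_minimal by blast
    have indep: "vs1.independent (insert x B)"
      using B spanB xU vs1.independent_insertI by blast
    then obtain g where g: "Vector_Spaces.linear sc (*) g" "\<forall>y\<in>insert x B. g y = (if y = x then 1 else 0)"
      using vsp.linear_independent_extend[OF indep, of "\<lambda>y. if y = x then 1 else 0"] by blast
    have gx: "g x = 1" using g by simp
    have gU: "\<forall>u\<in>U. g u = 0"
    proof -
      have "\<forall>y\<in>B. g y = 0" using g xU B(1) by auto
      then show ?thesis using vsp.linear_eq_0_on_span[OF g(1)] spanB by blast
    qed
    define K where "K = (UNIV::'m set) \<times> {Q,P}"
    have finK: "finite K" unfolding K_def by simp
    define d where "d k = (\<lambda>j. if j = k then (1::'a) else 0)" for k :: "'m \<times> quad"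
    define m where "m k = g (d k)" for k
    have decomp: "f = (\<Sum>k\<in>K. sc (f k) (d k))" for f :: "('a,'m) phase"
    proof
      fix j :: "'m \<times> quad"
      have jK: "j \<in> K" unfolding K_def using quad.exhaust[of "snd j"] by (auto simp: mem_Times_iff)
      have "(\<Sum>k\<in>K. sc (f k) (d k)) j = (\<Sum>k\<in>K. f k * d k j)"
        by (simp add: sum_fun_apply'[OF finK] sc_def)
      also have "\<dots> = f j" using jK finK by (simp add: d_def if_distrib[of "\<lambda>z. _ * z"] eq_commute[of j] cong: if_cong)
      finally show "f j = (\<Sum>k\<in>K. sc (f k) (d k)) j" by simp
    qed
    have gval: "g f = val f m" for f
    proof -
      have "g f = g (\<Sum>k\<in>K. sc (f k) (d k))" using decomp[of f] by simp
      also have "\<dots> = (\<Sum>k\<in>K. f k * g (d k))"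
        using g(1) by (simp add: vsp.linear_sum vsp.linear_scale)
      also have "\<dots> = val f m" unfolding val_alt K_def m_def by simp
      finally show ?thesis .
    qed
    have "m \<in> perp U" unfolding perp_def using gU gval by simp
    then have "val m x = 0" using x unfolding perp_def by blast
    then have "val x m = 0" by (simp add: val_sym)
    then show False using gx gval by simp
  qed
qed

lemma val_padd_left: "val (padd f g) m = val f m + val g m"
  by (simp add: val_def padd_def sum.distrib algebra_simps)

lemma val_add_right: "val f (\<lambda>x. a x + b x) = val f a + val f b"
  by (simp add: val_def sum.distrib algebra_simps)

lemma val_diff_right: "val f (\<lambda>x. a x - b x) = val f a - val f b"
  by (simp add: val_def sum_subtractf algebra_simps)

lemma val_psmult: "val (psmult c f) m = c * val f m"
  by (simp add: val_def psmult_def sum_distrib_left algebra_simps)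

lemma val_pzero: "val pzero m = 0"
  by (simp add: val_def pzero_def)

lemma pbracket_padd: "pbracket (padd f g) h = pbracket f h + pbracket g h"
  by (simp add: pbracket_def padd_def sum.distrib[symmetric] algebra_simps)

lemma pbracket_psmult: "pbracket (psmult c f) h = c * pbracket f h"
  by (simp add: pbracket_def psmult_def sum_distrib_left algebra_simps)

lemma pbracket_pzero: "pbracket pzero h = 0"
  by (simp add: pbracket_def pzero_def)

lemma coset_perp_iff: "y \<in> coset (perp W) v \<longleftrightarrow> (\<forall>f\<in>W. val f y = val f v)"
proof
  assume "y \<in> coset (perp W) v"
  then obtain w where w: "w \<in> perp W" "y = padd w v" unfolding coset_def by auto
  have "y = (\<lambda>x. w x + v x)" using w(2) by (simp add: padd_def)
  then show "\<forall>f\<in>W. val f y = val f v" using w(1) by (simp add: val_add_right perp_def)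
next
  assume H: "\<forall>f\<in>W. val f y = val f v"
  have "(\<lambda>x. y x - v x) \<in> perp W" using H by (simp add: perp_def val_diff_right)
  moreover have "y = padd (\<lambda>x. y x - v x) v" by (simp add: padd_def)
  ultimately show "y \<in> coset (perp W) v" unfolding coset_def by blast
qed

lemma perp_antimono: "A \<subseteq> B \<Longrightarrow> perp B \<subseteq> perp A"
  unfolding perp_def by auto

lemma sub_perp_perp: "A \<subseteq> perp (perp A)"
  unfolding perp_def by (auto simp: val_sym)

theorem lemma7:
  fixes V VA VB :: "('a::field, 'm::finite) phase set"
    and v vA vB :: "('a, 'm) phase"
    and SA SB :: "'m set"
  assumes "valid_state V v"
    and "measurement_on SA VA"
    and "measurement_on SB VB"
  shows "can_infer V v VA vA VB vB \<longleftrightarrow>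
           (VB \<subseteq> sumsp (commute_part V VA) VA \<and>
            coset (perp (commute_part V VA)) v \<inter> coset (perp VA) vA \<inter> coset (perp VB) vB \<noteq> {})"
proof -
  define W where "W = commute_part V VA"
  define U where "U = sumsp W VA"
  define S where "S = coset (perp VA) vA \<inter> coset (perp W) v"
  have Vs: "is_subspace V" using assms(1) unfolding valid_state_def isotropic_def by simp
  have VAs: "is_subspace VA" using assms(2) unfolding measurement_on_def isotropic_def by simp
  have Ws: "is_subspace W"
    using Vs unfolding W_def commute_part_def is_subspace_def
    by (auto simp: pbracket_padd pbracket_psmult pbracket_pzero)
  have Us: "is_subspace U"
    unfolding is_subspace_def
  proof (intro conjI ballI allI impI)
    show "pzero \<in> U" unfolding U_def sumsp_def using Ws VAs
      by (auto simp: is_subspace_def intro!: exI[of _ pzero] ext simp: padd_def pzero_def)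
  next
    fix f g assume "f \<in> U" "g \<in> U"
    then obtain f1 f2 g1 g2 where "f1 \<in> W" "f2 \<in> VA" "g1 \<in> W" "g2 \<in> VA"
      "f = padd f1 f2" "g = padd g1 g2" unfolding U_def sumsp_def by blast
    moreover have "padd f g = padd (padd f1 g1) (padd f2 g2)" using calculation
      by (auto simp: padd_def)
    ultimately show "padd f g \<in> U" using Ws VAs unfolding U_def sumsp_def is_subspace_def by blast
  next
    fix c f assume "f \<in> U"
    then obtain f1 f2 where "f1 \<in> W" "f2 \<in> VA" "f = padd f1 f2" unfolding U_def sumsp_def by blast
    moreover have "psmult c f = padd (psmult c f1) (psmult c f2)" using calculation
      by (auto simp: padd_def psmult_def algebra_simps)
    ultimately show "psmult c f \<in> U" using Ws VAs unfolding U_def sumsp_def is_subspace_def by blast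
  qed
  have padd0: "padd f pzero = f" "padd pzero f = f" for f :: "('a,'m) phase"
    by (auto simp: padd_def pzero_def)
  have p0W: "pzero \<in> W" and p0A: "pzero \<in> VA" using Ws VAs unfolding is_subspace_def by auto
  have WU: "W \<subseteq> U"
  proof
    fix f assume "f \<in> W"
    then show "f \<in> U" unfolding U_def sumsp_def using p0A padd0(1)[of f, symmetric] by blast
  qed
  have VAU: "VA \<subseteq> U"
  proof
    fix f assume "f \<in> VA"
    then show "f \<in> U" unfolding U_def sumsp_def using p0W padd0(2)[of f, symmetric] by blast
  qed
  have valU: "(\<forall>f\<in>U. val f y = val f z) \<longleftrightarrow> (\<forall>f\<in>W. val f y = val f z) \<and> (\<forall>f\<in>VA. val f y = val f z)"
    for y z
  proof
    assume "\<forall>f\<in>U. val f y = val f z" then show "(\<forall>f\<in>W. val f y = val f z) \<and> (\<forall>f\<in>VA. val f y = val f z)"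
      using WU VAU by blast
  next
    assume H: "(\<forall>f\<in>W. val f y = val f z) \<and> (\<forall>f\<in>VA. val f y = val f z)"
    show "\<forall>f\<in>U. val f y = val f z"
    proof
      fix f assume "f \<in> U"
      then obtain f1 f2 where "f1 \<in> W" "f2 \<in> VA" "f = padd f1 f2" unfolding U_def sumsp_def by blast
      then show "val f y = val f z" using H by (simp add: val_padd_left)
    qed
  qed
  have inS: "y \<in> S \<longleftrightarrow> (\<forall>f\<in>U. val f y = val f z)" if "z \<in> S" for y z
    using that unfolding S_def by (auto simp: coset_perp_iff valU)
  have ci: "can_infer V v VA vA VB vB \<longleftrightarrow> S \<noteq> {} \<and> (\<forall>v'\<in>S. occurs_certainly U v' VB vB)"
    unfolding can_infer_def Let_def S_def U_def W_def by simp
  show ?thesis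
    unfolding ci W_def[symmetric] U_def[symmetric]
  proof
    assume H: "S \<noteq> {} \<and> (\<forall>v'\<in>S. occurs_certainly U v' VB vB)"
    then obtain v' where v': "v' \<in> S" by blast
    have oc: "coset (perp U) v' \<subseteq> coset (perp VB) vB"
      using H v' unfolding occurs_certainly_def by blast
    have "v' \<in> coset (perp U) v'" by (simp add: coset_perp_iff)
    then have v'B: "v' \<in> coset (perp VB) vB" using oc by blast
    have "perp U \<subseteq> perp VB"
    proof
      fix m assume m: "m \<in> perp U"
      have "(\<lambda>x. m x + v' x) \<in> coset (perp U) v'"
        using m unfolding coset_perp_iff by (simp add: val_add_right perp_def)
      then have "(\<lambda>x. m x + v' x) \<in> coset (perp VB) vB" using oc by blast
      then show "m \<in> perp VB" using v'B
        unfolding coset_perp_iff by (simp add: val_add_right perp_def)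
    qed
    then have "VB \<subseteq> U" using sub_perp_perp[of VB] perp_antimono perp_perp[OF Us] by blast
    moreover have "v' \<in> coset (perp W) v \<inter> coset (perp VA) vA \<inter> coset (perp VB) vB"
      using v' v'B unfolding S_def by blast
    ultimately show "VB \<subseteq> U \<and> coset (perp W) v \<inter> coset (perp VA) vA \<inter> coset (perp VB) vB \<noteq> {}"
      by blast
  next
    assume H: "VB \<subseteq> U \<and> coset (perp W) v \<inter> coset (perp VA) vA \<inter> coset (perp VB) vB \<noteq> {}"
    then obtain x where x: "x \<in> coset (perp W) v" "x \<in> coset (perp VA) vA" "x \<in> coset (perp VB) vB"
      by blast
    have xS: "x \<in> S" using x unfolding S_def by blast
    have "\<forall>v'\<in>S. occurs_certainly U v' VB vB"
    proof
      fix v' assume v': "v' \<in> S"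
      have xv': "\<forall>f\<in>U. val f v' = val f x" using inS[OF xS] v' by blast
      show "occurs_certainly U v' VB vB"
        unfolding occurs_certainly_def
      proof
        fix y assume "y \<in> coset (perp U) v'"
        then have "\<forall>f\<in>U. val f y = val f v'" by (simp add: coset_perp_iff)
        then show "y \<in> coset (perp VB) vB"
          using xv' x(3) H by (auto simp: coset_perp_iff)
      qed
    qed
    then show "S \<noteq> {} \<and> (\<forall>v'\<in>S. occurs_certainly U v' VB vB)" using xS by blast
  qed
qed

end
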